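(* Let $p(\cdot),q(\cdot),r(\cdot)\in\mathcal{P}(\mathbb{R}^n)$ satisfy $\frac{1}{r(x)}=\frac{1}{p(x)}+\frac{1}{q(x)}$, and assume either $r(\cdot)<p(\cdot)<\infty$, or $r(\cdot)\le p(\cdot)<\infty$ with $r^+<\infty$. For measurable $f$ set $\|f\|^*_{p(\cdot)}=\sup_{\|g\|_{q(\cdot)}\le1}\|fg\|_{r(\cdot)}$. Then $\|f\|^*_{p(\cdot)}\approx\|f\|_{p(\cdot)}$, i.e. there are constants $c_1,c_2>0$ independent of $f$ with $c_1\|f\|_{p(\cdot)}\le\|f\|^*_{p(\cdot)}\le c_2\|f\|_{p(\cdot)}$.
   Context: $\mathcal{P}(\mathbb{R}^n)$: measurable $p(\cdot):\mathbb{R}^n\to[1,\infty]$; $p^+$ essential supremum. $\|f\|_{p(\cdot)}=\inf\{\lambda>0:\int_{\{p<\infty\}}|f/\lambda|^{p(x)}dx+\|(f/\lambda)\chi_{\{p=\infty\}}\|_\infty\le1\}$. *)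

theory Defs
  imports "HOL-Analysis.Analysis" "HOL-Probability.Essential_Supremum"
begin

definition var_exponent :: "('a::euclidean_space \<Rightarrow> ereal) \<Rightarrow> bool" where
  "var_exponent p \<longleftrightarrow> p \<in> borel_measurable lebesgue \<and> (\<forall>x. 1 \<le> p x)"

definition var_modular :: "('a::euclidean_space \<Rightarrow> ereal) \<Rightarrow> ('a \<Rightarrow> real) \<Rightarrow> ennreal" where
  "var_modular p f =
     (\<integral>\<^sup>+ x \<in> {x. p x < \<infinity>}. ennreal (\<bar>f x\<bar> powr real_of_ereal (p x)) \<partial>lebesgue)
     + esssup lebesgue (\<lambda>x. ennreal \<bar>f x\<bar> * indicator {x. p x = \<infinity>} x)"

text \<open>Luxemburg norm, valued in ennreal (infinite if no admissible lambda exists).\<close>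

definition var_norm :: "('a::euclidean_space \<Rightarrow> ereal) \<Rightarrow> ('a \<Rightarrow> real) \<Rightarrow> ennreal" where
  "var_norm p f = (INF l \<in> {l::real. 0 < l \<and> var_modular p (\<lambda>x. f x / l) \<le> 1}. ennreal l)"

definition var_norm_star ::
  "('a::euclidean_space \<Rightarrow> ereal) \<Rightarrow> ('a \<Rightarrow> ereal) \<Rightarrow> ('a \<Rightarrow> real) \<Rightarrow> ennreal" where
  "var_norm_star q r f =
     (SUP g \<in> {g. g \<in> borel_measurable lebesgue \<and> var_norm q g \<le> 1}. var_norm r (\<lambda>x. f x * g x))"

end

theory Submission
  imports Defs
begin


lemma half_powr_le: fixes R :: real assumes "R \<ge> 1" shows "(1/2) powr R \<le> 1/2"
proof -
  have "(1/2::real) powr R \<le> (1/2) powr 1" using assms by (intro powr_mono') auto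
  thus ?thesis by simp
qed

lemma young_pt:
  fixes u v P Q R :: real
  assumes u: "u \<ge> 0" and v: "v \<ge> 0" and R: "R \<ge> 1" and P: "P \<ge> 1" and Q: "Q \<ge> 1"
    and rel: "1/R = 1/P + 1/Q"
  shows "(u * v / 2) powr R \<le> (u powr P + v powr Q)/2"
proof -
  have RP: "R < P" and RQ: "R < Q"
  proof -
    have "1/P < 1/R" "1/Q < 1/R" using rel P Q by auto
    thus "R < P" "R < Q" using R P Q by (auto simp: divide_simps)
  qed
  have "(u * v / 2) powr R = (u * v * (1/2)) powr R" by simp
  also have "\<dots> = (u powr R * v powr R) * (1/2) powr R"
    by (simp only: powr_mult)
  also have "\<dots> \<le> (u powr R * v powr R) * (1/2)"
    using half_powr_le[OF R] by (intro mult_left_mono) auto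
  finally have s1: "(u * v / 2) powr R \<le> (u powr R * v powr R) * (1/2)" .
  have "u powr R * v powr R \<le> (u powr R) powr (P/R) / (P/R) + (v powr R) powr (Q/R) / (Q/R)"
    apply (rule Youngs_inequality)
    using RP RQ R rel by (auto simp: field_simps)
  also have "\<dots> = u powr P * (R/P) + v powr Q * (R/Q)"
    using R by (simp add: powr_powr)
  also have "\<dots> \<le> u powr P + v powr Q"
    using RP RQ R
    by (intro add_mono mult_left_le) auto
  finally show ?thesis using s1 by simp
qed

lemma inf_pt:
  fixes u v P :: real
  assumes u: "u \<ge> 0" and v: "v \<ge> 0" "v \<le> 1" and P: "P \<ge> 1"
  shows "(u * v / 2) powr P \<le> (u powr P)/2"
proof -
  have uv: "u * v \<le> u" using u v by (simp add: mult_left_le)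
  have "(u * v / 2) powr P \<le> (u * (1/2)) powr P"
    using u v P uv by (intro powr_mono2) auto
  also have "\<dots> = u powr P * (1/2) powr P" by (simp only: powr_mult)
  also have "\<dots> \<le> u powr P * (1/2)" using half_powr_le[OF P] by (intro mult_left_mono) auto
  finally show ?thesis by simp
qed

lemma ident_pt:
  fixes t S P Q R :: real
  assumes t: "t \<ge> 0" and S: "S > 0" and R: "R \<ge> 1" and P: "P \<ge> 1" and Q: "Q \<ge> 1"
    and rel: "1/R = 1/P + 1/Q"
  shows "(t * (t powr P / S) powr (1/Q)) powr R = t powr P * S powr (-(R/Q))"
proof (cases "t = 0")
  case True thus ?thesis using P R by simp
next
  case False
  hence t: "t > 0" using t by simp
  have e: "R + P*R/Q = P" using rel R P Q by (simp add: field_simps)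
  have "(t * (t powr P / S) powr (1/Q)) powr R = t powr R * (t powr (P*R/Q)) * S powr (-(R/Q))"
    using t S by (simp add: powr_mult powr_divide powr_powr powr_minus divide_inverse inverse_powr mult_ac)
  also have "\<dots> = t powr (R + P*R/Q) * S powr (-(R/Q))" by (simp add: powr_add)
  finally show ?thesis using e by simp
qed

lemma Spow_ge:
  fixes S a :: real assumes S: "S > 0" and a: "0 \<le> a" "a \<le> 1"
  shows "S powr (-a) \<ge> min 1 (1/S)"
proof (cases "S \<ge> 1")
  case True
  have "S powr (-1) \<le> S powr (-a)" using True a by (intro powr_mono) auto
  thus ?thesis using S by (simp add: powr_minus_divide)
next
  case False
  have "S powr (-a) \<ge> S powr 0" using False a S by (intro powr_mono') auto
  thus ?thesis using S by simp
qed

lemma ereal_ge1_real: "1 \<le> (x::ereal) \<Longrightarrow> x < \<infinity> \<Longrightarrow> 1 \<le> real_of_ereal x \<and> x = ereal (real_of_ereal x)"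
  by (cases x) auto

lemma modular_fin:
  fixes p :: "'a::euclidean_space \<Rightarrow> ereal"
  assumes "\<And>x. p x < \<infinity>"
  shows "var_modular p h = (\<integral>\<^sup>+ x. ennreal (\<bar>h x\<bar> powr real_of_ereal (p x)) \<partial>lebesgue)"
proof -
  have U: "{x. p x < \<infinity>} = UNIV" "{x. p x = \<infinity>} = {}" using assms by auto
  have "esssup lebesgue (\<lambda>x::'a. 0::ennreal) \<le> 0" by (intro esssup_I) auto
  hence "esssup lebesgue (\<lambda>x::'a. 0::ennreal) = 0" by simp
  thus ?thesis unfolding var_modular_def U by simp
qed

lemma norm_le:
  assumes "0 < l" "var_modular p (\<lambda>x. h x / l) \<le> 1"
  shows "var_norm p h \<le> ennreal l"
  unfolding var_norm_def using assms by (intro INF_lower) auto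

lemma norm_ge:
  fixes p :: "'a::euclidean_space \<Rightarrow> ereal"
  assumes pm[measurable]: "p \<in> borel_measurable lebesgue" and hm[measurable]: "h \<in> borel_measurable lebesgue"
    and pfin: "\<And>x. p x < \<infinity>" and p1: "\<And>x. 1 \<le> p x"
    and mu: "0 < \<mu>" and c: "0 < c" "c \<le> 1"
    and I: "ennreal c \<le> (\<integral>\<^sup>+ x. ennreal (\<bar>h x / \<mu>\<bar> powr real_of_ereal (p x)) \<partial>lebesgue)"
  shows "ennreal (c * \<mu>) \<le> var_norm p h"
  unfolding var_norm_def
proof (rule INF_greatest)
  fix l assume "l \<in> {l. 0 < l \<and> var_modular p (\<lambda>x. h x / l) \<le> 1}"
  hence l: "0 < l" and M: "var_modular p (\<lambda>x. h x / l) \<le> 1" by auto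
  show "ennreal (c * \<mu>) \<le> ennreal l"
  proof (rule ccontr)
    assume "\<not> ?thesis"
    hence lc: "l < c * \<mu>" by (metis ennreal_leI not_le)
    define t where "t = \<mu> / l"
    have cm: "c * \<mu> \<le> \<mu>" using c mu by (simp add: mult_left_le_one_le)
    have t1: "t * c > 1"
    proof -
      have "t * c = (c * \<mu>) / l" unfolding t_def by simp
      moreover have "(c * \<mu>) / l > 1" using lc l by simp
      ultimately show ?thesis by simp
    qed
    have t0: "t \<ge> 1"
    proof -
      have "\<mu> / l > 1" using lc cm l by simp
      thus ?thesis unfolding t_def by simp
    qed
    have "ennreal (t * c) = ennreal t * ennreal c" using t0 c by (intro ennreal_mult) auto
    also have "\<dots> \<le> ennreal t * (\<integral>\<^sup>+ x. ennreal (\<bar>h x / \<mu>\<bar> powr real_of_ereal (p x)) \<partial>lebesgue)"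
      using I by (intro mult_left_mono) auto
    also have "\<dots> = (\<integral>\<^sup>+ x. ennreal t * ennreal (\<bar>h x / \<mu>\<bar> powr real_of_ereal (p x)) \<partial>lebesgue)"
      by (rule nn_integral_cmult[symmetric]) measurable
    also have "\<dots> \<le> (\<integral>\<^sup>+ x. ennreal (\<bar>h x / l\<bar> powr real_of_ereal (p x)) \<partial>lebesgue)"
    proof (rule nn_integral_mono)
      fix x
      have P1: "1 \<le> real_of_ereal (p x)" using ereal_ge1_real[OF p1 pfin] by blast
      have e: "\<bar>h x / l\<bar> = t * \<bar>h x / \<mu>\<bar>"
      proof -
        have "t * \<bar>h x / \<mu>\<bar> = (\<mu> / l) * (\<bar>h x\<bar> / \<mu>)" unfolding t_def using mu by (simp add: abs_divide)
        also have "\<dots> = \<bar>h x\<bar> / l" using mu by simp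
        finally show ?thesis using l by (simp add: abs_divide)
      qed
      have "t = t powr 1" using t0 by simp
      also have "\<dots> \<le> t powr real_of_ereal (p x)" using t0 P1 by (intro powr_mono) auto
      finally have tt: "t \<le> t powr real_of_ereal (p x)" .
      have le: "t * \<bar>h x / \<mu>\<bar> powr real_of_ereal (p x) \<le> \<bar>h x / l\<bar> powr real_of_ereal (p x)"
        unfolding e powr_mult using tt by (intro mult_right_mono) auto
      have "ennreal t * ennreal (\<bar>h x / \<mu>\<bar> powr real_of_ereal (p x))
          = ennreal (t * \<bar>h x / \<mu>\<bar> powr real_of_ereal (p x))"
        using t0 by (intro ennreal_mult[symmetric]) auto
      also have "\<dots> \<le> ennreal (\<bar>h x / l\<bar> powr real_of_ereal (p x))" using le by (rule ennreal_leI)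
      finally show "ennreal t * ennreal (\<bar>h x / \<mu>\<bar> powr real_of_ereal (p x)) \<le> ennreal (\<bar>h x / l\<bar> powr real_of_ereal (p x))" .
    qed
    also have "\<dots> = var_modular p (\<lambda>x. h x / l)" using modular_fin[of p] pfin by simp
    also have "\<dots> \<le> 1" by fact
    finally have "ennreal (t * c) \<le> 1" .
    hence "t * c \<le> 1" by simp
    thus False using t1 by simp
  qed
qed

lemma modular_mono:
  fixes q :: "'a::euclidean_space \<Rightarrow> ereal"
  assumes [measurable]: "q \<in> borel_measurable lebesgue" "g \<in> borel_measurable lebesgue"
    and q1: "\<And>x. 1 \<le> q x" and l: "0 < l" "l \<le> b"
  shows "var_modular q (\<lambda>x. g x / b) \<le> var_modular q (\<lambda>x. g x / l)"
  unfolding var_modular_def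
proof (intro add_mono nn_integral_mono esssup_mono)
  fix x
  have a: "\<bar>g x / b\<bar> \<le> \<bar>g x / l\<bar>" using l by (simp add: abs_divide divide_left_mono)
  have "0 \<le> real_of_ereal (q x)" using q1[of x] by (cases "q x") auto
  hence "\<bar>g x / b\<bar> powr real_of_ereal (q x) \<le> \<bar>g x / l\<bar> powr real_of_ereal (q x)"
    using a by (intro powr_mono2) auto
  thus "ennreal (\<bar>g x / b\<bar> powr real_of_ereal (q x)) * indicator {x. q x < \<infinity>} x
     \<le> ennreal (\<bar>g x / l\<bar> powr real_of_ereal (q x)) * indicator {x. q x < \<infinity>} x"
    by (intro mult_right_mono) auto
  show "ennreal \<bar>g x / b\<bar> * indicator {x. q x = \<infinity>} x \<le> ennreal \<bar>g x / l\<bar> * indicator {x. q x = \<infinity>} x"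
    using a by (intro mult_right_mono) auto
next
  show "(\<lambda>x. ennreal \<bar>g x / b\<bar> * indicator {x. q x = \<infinity>} x) \<in> borel_measurable lebesgue" by measurable
qed

lemma expo_pt:
  fixes p q r :: ereal
  assumes "1 \<le> p" "1 \<le> q" "1 \<le> r" "p < \<infinity>" "inverse r = inverse p + inverse q"
  shows "r < \<infinity>" "q = \<infinity> \<Longrightarrow> r = p"
    "q < \<infinity> \<Longrightarrow> 1 / real_of_ereal r = 1 / real_of_ereal p + 1 / real_of_ereal q"
proof -
  have A: "r < \<infinity>"
    using assms by (cases p; cases q; cases r)
      (auto split: if_splits simp: divide_inverse, smt (verit) inverse_positive_iff_positive)
  show "r < \<infinity>" by (fact A)
  show "q = \<infinity> \<Longrightarrow> r = p" using assms A by (cases p; cases r) (auto split: if_splits)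
  show "q < \<infinity> \<Longrightarrow> 1 / real_of_ereal r = 1 / real_of_ereal p + 1 / real_of_ereal q"
    using assms A by (cases p; cases q; cases r) (auto split: if_splits simp: divide_inverse)
qed



lemma enn_half:
  fixes X A B :: real
  assumes "0 \<le> A" "0 \<le> B" "X \<le> (A + B) / 2"
  shows "ennreal X \<le> ennreal (1/2) * (ennreal A + ennreal B)"
proof -
  have "ennreal A + ennreal B = ennreal (A + B)" using assms by simp
  moreover have "ennreal (1/2 * (A + B)) = ennreal (1/2) * ennreal (A + B)"
    using assms by (intro ennreal_mult) auto
  moreover have "ennreal X \<le> ennreal (1/2 * (A + B))" using assms by (intro ennreal_leI) auto
  ultimately show ?thesis by simp
qed

lemma upper:
  fixes p q r :: "'a::euclidean_space \<Rightarrow> ereal"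
  assumes pm[measurable]: "p \<in> borel_measurable lebesgue"
    and qm[measurable]: "q \<in> borel_measurable lebesgue"
    and rm[measurable]: "r \<in> borel_measurable lebesgue"
    and p1: "\<And>x. 1 \<le> p x" and q1: "\<And>x. 1 \<le> q x" and r1: "\<And>x. 1 \<le> r x"
    and pfin: "\<And>x. p x < \<infinity>" and rfin: "\<And>x. r x < \<infinity>"
    and qinf: "\<And>x. q x = \<infinity> \<Longrightarrow> r x = p x"
    and qfin: "\<And>x. q x < \<infinity> \<Longrightarrow>
       1 / real_of_ereal (r x) = 1 / real_of_ereal (p x) + 1 / real_of_ereal (q x)"
    and fm[measurable]: "f \<in> borel_measurable lebesgue"
    and gm[measurable]: "g \<in> borel_measurable lebesgue"
    and gn: "var_norm q g \<le> 1"
  shows "var_norm r (\<lambda>x. f x * g x) \<le> 2 * var_norm p f"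
proof -
  have U1: "var_norm r (\<lambda>x. f x * g x) \<le> ennreal (2*a*b)"
    if a: "0 < a" "var_modular p (\<lambda>x. f x / a) \<le> 1"
      and b: "0 < b" "var_modular q (\<lambda>x. g x / b) \<le> 1" for a b
  proof -
    have Ia: "(\<integral>\<^sup>+x. ennreal (\<bar>f x / a\<bar> powr real_of_ereal (p x)) \<partial>lebesgue) \<le> 1"
      using a(2) modular_fin[of p] pfin by simp
    have Ib: "(\<integral>\<^sup>+x. ennreal (\<bar>g x / b\<bar> powr real_of_ereal (q x)) * indicator {x. q x < \<infinity>} x \<partial>lebesgue) \<le> 1"
      using b(2) unfolding var_modular_def by (rule order_trans[rotated]) (rule add_increasing2; simp)
    have Es: "esssup lebesgue (\<lambda>x. ennreal \<bar>g x / b\<bar> * indicator {x. q x = \<infinity>} x) \<le> 1"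
      using b(2) unfolding var_modular_def by (rule order_trans[rotated]) (rule add_increasing; simp)
    have AEb: "AE x in lebesgue. q x = \<infinity> \<longrightarrow> \<bar>g x / b\<bar> \<le> 1"
      using esssup_AE[where M=lebesgue and f="\<lambda>x. ennreal \<bar>g x / b\<bar> * indicator {x. q x = \<infinity>} x"]
    proof eventually_elim
      case (elim x)
      have "ennreal \<bar>g x / b\<bar> * indicator {x. q x = \<infinity>} x \<le> 1" using elim Es by (rule order_trans)
      thus ?case by (auto simp: indicator_def)
    qed
    have "var_modular r (\<lambda>x. f x * g x / (2*a*b)) =
        (\<integral>\<^sup>+x. ennreal (\<bar>f x * g x / (2*a*b)\<bar> powr real_of_ereal (r x)) \<partial>lebesgue)"
      using modular_fin[of r] rfin by simp
    also have "\<dots> \<le> (\<integral>\<^sup>+x. ennreal (1/2) * (ennreal (\<bar>f x / a\<bar> powr real_of_ereal (p x))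
          + ennreal (\<bar>g x / b\<bar> powr real_of_ereal (q x)) * indicator {x. q x < \<infinity>} x) \<partial>lebesgue)"
    proof (rule nn_integral_mono_AE)
      show "AE x in lebesgue. ennreal (\<bar>f x * g x / (2*a*b)\<bar> powr real_of_ereal (r x)) \<le>
          ennreal (1/2) * (ennreal (\<bar>f x / a\<bar> powr real_of_ereal (p x))
          + ennreal (\<bar>g x / b\<bar> powr real_of_ereal (q x)) * indicator {x. q x < \<infinity>} x)"
        using AEb
      proof eventually_elim
        case (elim x)
        have e: "\<bar>f x * g x / (2*a*b)\<bar> = \<bar>f x / a\<bar> * \<bar>g x / b\<bar> / 2"
          using a b by (simp add: abs_mult abs_divide)
        have P1: "1 \<le> real_of_ereal (p x)" using ereal_ge1_real[OF p1 pfin] by blast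
        have R1: "1 \<le> real_of_ereal (r x)" using ereal_ge1_real[OF r1 rfin] by blast
        show ?case
        proof (cases "q x = \<infinity>")
          case True
          hence v: "\<bar>g x / b\<bar> \<le> 1" and rp: "r x = p x" using elim qinf by auto
          have "\<bar>f x * g x / (2*a*b)\<bar> powr real_of_ereal (r x) \<le> (\<bar>f x / a\<bar> powr real_of_ereal (p x) + 0) / 2"
          proof -
            have h: "(\<bar>f x / a\<bar> * \<bar>g x / b\<bar> / 2) powr real_of_ereal (p x) \<le> (\<bar>f x / a\<bar> powr real_of_ereal (p x) + 0) / 2"
              using inf_pt[of "\<bar>f x / a\<bar>" "\<bar>g x / b\<bar>", OF abs_ge_zero abs_ge_zero v P1] by simp
            have "\<bar>f x * g x / (2*a*b)\<bar> powr real_of_ereal (r x) = (\<bar>f x / a\<bar> * \<bar>g x / b\<bar> / 2) powr real_of_ereal (p x)"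
              using e rp by simp
            thus ?thesis using h by (rule ord_eq_le_trans)
          qed
          from enn_half[OF _ _ this] show ?thesis using True by simp
        next
          case False
          hence qf: "q x < \<infinity>" by simp
          have Q1: "1 \<le> real_of_ereal (q x)" using ereal_ge1_real[OF q1 qf] by blast
          have "\<bar>f x * g x / (2*a*b)\<bar> powr real_of_ereal (r x) \<le>
              (\<bar>f x / a\<bar> powr real_of_ereal (p x) + \<bar>g x / b\<bar> powr real_of_ereal (q x)) / 2"
            unfolding e by (rule young_pt[OF _ _ R1 P1 Q1 qfin[OF qf]]) auto
          from enn_half[OF _ _ this] show ?thesis using qf by simp
        qed
      qed
    qed
    also have "\<dots> = ennreal (1/2) * ((\<integral>\<^sup>+x. ennreal (\<bar>f x / a\<bar> powr real_of_ereal (p x)) \<partial>lebesgue)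
        + (\<integral>\<^sup>+x. ennreal (\<bar>g x / b\<bar> powr real_of_ereal (q x)) * indicator {x. q x < \<infinity>} x \<partial>lebesgue))"
    proof -
      have "(\<integral>\<^sup>+x. ennreal (1/2) * (ennreal (\<bar>f x / a\<bar> powr real_of_ereal (p x))
          + ennreal (\<bar>g x / b\<bar> powr real_of_ereal (q x)) * indicator {x. q x < \<infinity>} x) \<partial>lebesgue)
        = ennreal (1/2) * (\<integral>\<^sup>+x. (ennreal (\<bar>f x / a\<bar> powr real_of_ereal (p x))
          + ennreal (\<bar>g x / b\<bar> powr real_of_ereal (q x)) * indicator {x. q x < \<infinity>} x) \<partial>lebesgue)"
        by (rule nn_integral_cmult) measurable
      also have "(\<integral>\<^sup>+x. (ennreal (\<bar>f x / a\<bar> powr real_of_ereal (p x))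
          + ennreal (\<bar>g x / b\<bar> powr real_of_ereal (q x)) * indicator {x. q x < \<infinity>} x) \<partial>lebesgue)
        = (\<integral>\<^sup>+x. ennreal (\<bar>f x / a\<bar> powr real_of_ereal (p x)) \<partial>lebesgue)
        + (\<integral>\<^sup>+x. ennreal (\<bar>g x / b\<bar> powr real_of_ereal (q x)) * indicator {x. q x < \<infinity>} x \<partial>lebesgue)"
        by (rule nn_integral_add) measurable
      finally show ?thesis .
    qed
    also have "\<dots> \<le> ennreal (1/2) * (1 + 1)"
      using Ia Ib by (intro mult_left_mono add_mono) auto
    also have "\<dots> = ennreal (1/2) * ennreal 2" by simp
    also have "\<dots> = ennreal (1/2 * 2)" by (rule ennreal_mult[symmetric]) auto
    also have "\<dots> = 1" by simp
    finally have "var_modular r (\<lambda>x. f x * g x / (2*a*b)) \<le> 1" .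
    thus ?thesis using a b by (intro norm_le) auto
  qed
  have U2: "var_norm r (\<lambda>x. f x * g x) \<le> ennreal (2*a)"
    if a: "0 < a" "var_modular p (\<lambda>x. f x / a) \<le> 1" for a
  proof (rule ennreal_le_epsilon)
    fix e :: real assume e: "0 < e"
    define b where "b = 1 + e/(2*a)"
    have b1: "1 < b" using e a by (simp add: b_def)
    have "var_norm q g < ennreal b" using gn b1
      by (metis ennreal_1 ennreal_less_iff order_le_less_trans zero_le_one)
    then obtain l where l: "0 < l" "var_modular q (\<lambda>x. g x / l) \<le> 1" "ennreal l < ennreal b"
      unfolding var_norm_def INF_less_iff by auto
    have lb: "l < b" using l ennreal_less_iff by auto
    have "var_modular q (\<lambda>x. g x / b) \<le> 1"
      using order_trans[OF modular_mono[of q g l b] l(2)] l lb q1 by auto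
    hence "var_norm r (\<lambda>x. f x * g x) \<le> ennreal (2*a*b)" using U1[OF a] b1 by auto
    also have "2*a*b = 2*a + e" using a by (simp add: b_def field_simps)
    finally show "var_norm r (\<lambda>x. f x * g x) \<le> ennreal (2*a) + ennreal e"
      using a e by (simp add: ennreal_plus[symmetric] del: ennreal_plus)
  qed
  show ?thesis
  proof (rule ennreal_le_epsilon)
    fix e :: real assume fin: "2 * var_norm p f < top" and e: "0 < e"
    have "var_norm p f < top" using fin by (auto simp: ennreal_mult_less_top)
    then obtain n where n: "0 \<le> n" "var_norm p f = ennreal n" by (auto simp: less_top_ennreal)
    have "var_norm p f < ennreal (n + e/2)" using n e by (simp add: ennreal_less_iff)
    then obtain a where a: "0 < a" "var_modular p (\<lambda>x. f x / a) \<le> 1" "ennreal a < ennreal (n + e/2)"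
      unfolding var_norm_def INF_less_iff by auto
    have an: "a < n + e/2" using a ennreal_less_iff by auto
    have "var_norm r (\<lambda>x. f x * g x) \<le> ennreal (2*a)" using U2 a by auto
    also have "\<dots> \<le> ennreal (2*n + e)" using an by (intro ennreal_leI) auto
    also have "\<dots> = 2 * var_norm p f + ennreal e"
      using n e by (simp add: ennreal_mult)
    finally show "var_norm r (\<lambda>x. f x * g x) \<le> 2 * var_norm p f + ennreal e" .
  qed
qed




lemma lower:
  fixes p q r :: "'a::euclidean_space \<Rightarrow> ereal"
  assumes pm[measurable]: "p \<in> borel_measurable lebesgue"
    and qm[measurable]: "q \<in> borel_measurable lebesgue"
    and rm[measurable]: "r \<in> borel_measurable lebesgue"
    and p1: "\<And>x. 1 \<le> p x" and q1: "\<And>x. 1 \<le> q x" and r1: "\<And>x. 1 \<le> r x"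
    and pfin: "\<And>x. p x < \<infinity>" and rfin: "\<And>x. r x < \<infinity>"
    and qinf: "\<And>x. q x = \<infinity> \<Longrightarrow> r x = p x"
    and qfin: "\<And>x. q x < \<infinity> \<Longrightarrow>
       1 / real_of_ereal (r x) = 1 / real_of_ereal (p x) + 1 / real_of_ereal (q x)"
    and fm[measurable]: "f \<in> borel_measurable lebesgue"
    and mu: "0 < \<mu>" and mlt: "ennreal \<mu> < var_norm p f"
  shows "ennreal (1/2 * \<mu>) \<le> var_norm_star q r f"
proof -
  define F where "F = (\<lambda>x. \<bar>f x / \<mu>\<bar> powr real_of_ereal (p x))"
  have Fm[measurable]: "F \<in> borel_measurable lebesgue" unfolding F_def by measurable
  have F0: "\<And>x. 0 \<le> F x" unfolding F_def by simp
  have big: "1 < (\<integral>\<^sup>+x. ennreal (F x) \<partial>lebesgue)"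
  proof (rule ccontr)
    assume "\<not> ?thesis"
    hence "var_modular p (\<lambda>x. f x / \<mu>) \<le> 1" using modular_fin[of p] pfin unfolding F_def by (simp add: not_less)
    hence "var_norm p f \<le> ennreal \<mu>" using mu by (intro norm_le)
    thus False using mlt by simp
  qed
  define E where "E = (\<lambda>k::nat. {x. F x \<le> real k} \<inter> ball 0 (real k))"
  have Em[measurable]: "E k \<in> sets lebesgue" for k
  proof -
    have "{x. F x \<le> real k} = {x \<in> space lebesgue. F x \<le> real k}" by simp
    also have "\<dots> \<in> sets lebesgue" by measurable
    finally show ?thesis unfolding E_def using lmeasurable_ball by (intro sets.Int) auto
  qed
  have Efin: "emeasure lebesgue (E k) < \<infinity>" for k
  proof -
    have "emeasure lebesgue (E k) \<le> emeasure lebesgue (ball (0::'a) (real k))"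
      unfolding E_def by (intro emeasure_mono) auto
    also have "\<dots> < \<infinity>" using fmeasurableD2[OF lmeasurable_ball] by (simp add: less_top)
    finally show ?thesis .
  qed
  have Emono: "E m \<subseteq> E n" if "m \<le> n" for m n
    using that unfolding E_def by auto
  have inc: "incseq (\<lambda>k x. ennreal (F x) * indicator (E k) x)"
    unfolding incseq_def le_fun_def
  proof (intro allI impI)
    fix m n :: nat and x assume "m \<le> n"
    hence "indicator (E m) x \<le> (indicator (E n) x :: ennreal)"
      using Emono by (auto simp: indicator_def)
    thus "ennreal (F x) * indicator (E m) x \<le> ennreal (F x) * indicator (E n) x"
      by (intro mult_left_mono) auto
  qed
  have sup: "(SUP k. ennreal (F x) * indicator (E k) x) = ennreal (F x)" for x
  proof (rule antisym)
    show "(SUP k. ennreal (F x) * indicator (E k) x) \<le> ennreal (F x)"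
      by (intro SUP_least) (auto simp: indicator_def)
    obtain k :: nat where k: "max (F x) (norm x) < real k" using reals_Archimedean2 by blast
    hence "x \<in> E k" unfolding E_def by (auto simp: dist_norm)
    thus "ennreal (F x) \<le> (SUP k. ennreal (F x) * indicator (E k) x)"
      by (intro SUP_upper2[of k]) auto
  qed
  have "(\<integral>\<^sup>+x. ennreal (F x) \<partial>lebesgue) = (SUP k. \<integral>\<^sup>+x. ennreal (F x) * indicator (E k) x \<partial>lebesgue)"
    using nn_integral_monotone_convergence_SUP[OF inc] sup by simp
  then obtain k where k: "1 < (\<integral>\<^sup>+x. ennreal (F x) * indicator (E k) x \<partial>lebesgue)"
    using big by (auto simp: less_SUP_iff)
  define A where "A = E k \<inter> {x. q x < \<infinity>}"
  define B where "B = E k \<inter> {x. q x = \<infinity>}"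
  have Am[measurable]: "A \<in> sets lebesgue"
  proof -
    have "{x. q x < \<infinity>} = {x \<in> space lebesgue. q x < \<infinity>}" by simp
    also have "\<dots> \<in> sets lebesgue" by measurable
    finally show ?thesis unfolding A_def by (intro sets.Int) auto
  qed
  have Bm[measurable]: "B \<in> sets lebesgue"
  proof -
    have "{x. q x = \<infinity>} = {x \<in> space lebesgue. q x = \<infinity>}" by simp
    also have "\<dots> \<in> sets lebesgue" by measurable
    finally show ?thesis unfolding B_def by (intro sets.Int) auto
  qed
  define sA where "sA = (\<integral>\<^sup>+x. ennreal (F x) * indicator A x \<partial>lebesgue)"
  define sB where "sB = (\<integral>\<^sup>+x. ennreal (F x) * indicator B x \<partial>lebesgue)"
  have split: "(\<integral>\<^sup>+x. ennreal (F x) * indicator (E k) x \<partial>lebesgue) = sA + sB"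
  proof -
    have "(\<integral>\<^sup>+x. ennreal (F x) * indicator (E k) x \<partial>lebesgue)
        = (\<integral>\<^sup>+x. ennreal (F x) * indicator A x + ennreal (F x) * indicator B x \<partial>lebesgue)"
    proof (rule nn_integral_cong)
      fix x
      have "q x < \<infinity> \<or> q x = \<infinity>" by (cases "q x") auto
      thus "ennreal (F x) * indicator (E k) x = ennreal (F x) * indicator A x + ennreal (F x) * indicator B x"
        unfolding A_def B_def by (auto simp: indicator_def)
    qed
    also have "\<dots> = sA + sB" unfolding sA_def sB_def by (rule nn_integral_add) measurable
    finally show ?thesis .
  qed
  have sfin: "sA + sB < \<infinity>"
  proof -
    have "(\<integral>\<^sup>+x. ennreal (F x) * indicator (E k) x \<partial>lebesgue) \<le> (\<integral>\<^sup>+x. ennreal (real k) * indicator (E k) x \<partial>lebesgue)"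
      by (intro nn_integral_mono) (auto simp: indicator_def E_def)
    also have "\<dots> = ennreal (real k) * emeasure lebesgue (E k)" by (rule nn_integral_cmult_indicator) simp
    also have "\<dots> < \<infinity>" using Efin[of k] by (simp add: ennreal_mult_less_top less_top)
    finally show ?thesis using split by simp
  qed
  have half: "ennreal (1/2) \<le> sA \<or> ennreal (1/2) \<le> sB"
  proof (rule ccontr)
    assume "\<not> ?thesis"
    hence "sA < ennreal (1/2)" "sB < ennreal (1/2)" by auto
    hence "sA + sB < ennreal (1/2) + ennreal (1/2)" by (rule add_strict_mono)
    also have "\<dots> = ennreal (1/2 + 1/2)" by (rule ennreal_plus[symmetric]) auto
    also have "\<dots> = 1" by simp
    finally show False using k split by simp
  qed
  have key: "\<exists>g. g \<in> borel_measurable lebesgue \<and> var_norm q g \<le> 1 \<and>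
      ennreal (1/2 * \<mu>) \<le> var_norm r (\<lambda>x. f x * g x)"
  proof (cases "ennreal (1/2) \<le> sB")
    case True
    define g where "g = (\<lambda>x. indicator B x :: real)"
    have gm[measurable]: "g \<in> borel_measurable lebesgue" unfolding g_def by measurable
    have "var_modular q (\<lambda>x. g x / 1) \<le> 1"
    proof -
      have I0: "(\<integral>\<^sup>+x. ennreal (\<bar>g x / 1\<bar> powr real_of_ereal (q x)) * indicator {x. q x < \<infinity>} x \<partial>lebesgue) = 0"
      proof -
        have "(\<integral>\<^sup>+x. ennreal (\<bar>g x / 1\<bar> powr real_of_ereal (q x)) * indicator {x. q x < \<infinity>} x \<partial>lebesgue) = (\<integral>\<^sup>+(x::'a). 0 \<partial>lebesgue)"
          by (rule nn_integral_cong) (auto simp: g_def B_def indicator_def)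
        thus ?thesis by simp
      qed
      have E1: "esssup lebesgue (\<lambda>x. ennreal \<bar>g x / 1\<bar> * indicator {x. q x = \<infinity>} x) \<le> 1"
        by (intro esssup_I) (auto simp: g_def indicator_def)
      show ?thesis unfolding var_modular_def using I0 E1 by simp
    qed
    hence gn: "var_norm q g \<le> 1" using norm_le[of 1 q g] by simp
    have "ennreal (1/2 * \<mu>) \<le> var_norm r (\<lambda>x. f x * g x)"
    proof (rule norm_ge[OF rm _ rfin r1 mu])
      show "(\<lambda>x. f x * g x) \<in> borel_measurable lebesgue" by measurable
      have "(\<integral>\<^sup>+ x. ennreal (\<bar>f x * g x / \<mu>\<bar> powr real_of_ereal (r x)) \<partial>lebesgue) = sB"
        unfolding sB_def
      proof (rule nn_integral_cong)
        fix x
        show "ennreal (\<bar>f x * g x / \<mu>\<bar> powr real_of_ereal (r x)) = ennreal (F x) * indicator B x"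
        proof (cases "x \<in> B")
          case True
          hence "r x = p x" using qinf unfolding B_def by auto
          thus ?thesis using True by (simp add: g_def F_def)
        next
          case False thus ?thesis by (simp add: g_def)
        qed
      qed
      thus "ennreal (1/2) \<le> (\<integral>\<^sup>+ x. ennreal (\<bar>f x * g x / \<mu>\<bar> powr real_of_ereal (r x)) \<partial>lebesgue)"
        using True by simp
    qed auto
    thus ?thesis using gm gn by blast
  next
    case False
    hence sA2: "ennreal (1/2) \<le> sA" using half by simp
    have "sA < \<infinity>" using sfin by (simp add: ennreal_add_less_top)
    then obtain S where S: "sA = ennreal S" "0 \<le> S" by (auto simp: less_top_ennreal)
    have S2: "1/2 \<le> S" using sA2 ennreal_le_iff[OF S(2), of "1/2"] unfolding S(1) by blast
    have Spos: "0 < S" using S2 by simp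
    define g where "g = (\<lambda>x. indicator A x * (F x / S) powr (1 / real_of_ereal (q x)))"
    have gm[measurable]: "g \<in> borel_measurable lebesgue" unfolding g_def by measurable
    have g0: "0 \<le> g x" for x unfolding g_def by simp
    have "var_modular q (\<lambda>x. g x / 1) \<le> 1"
    proof -
      have "(\<integral>\<^sup>+x. ennreal (\<bar>g x / 1\<bar> powr real_of_ereal (q x)) * indicator {x. q x < \<infinity>} x \<partial>lebesgue)
          = (\<integral>\<^sup>+x. ennreal (1/S) * (ennreal (F x) * indicator A x) \<partial>lebesgue)"
      proof (rule nn_integral_cong)
        fix x
        show "ennreal (\<bar>g x / 1\<bar> powr real_of_ereal (q x)) * indicator {x. q x < \<infinity>} x
            = ennreal (1/S) * (ennreal (F x) * indicator A x)"
        proof (cases "x \<in> A")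
          case True
          hence qf: "q x < \<infinity>" unfolding A_def by simp
          have Q1: "1 \<le> real_of_ereal (q x)" using ereal_ge1_real[OF q1 qf] by blast
          have "\<bar>g x / 1\<bar> powr real_of_ereal (q x) = ((F x / S) powr (1 / real_of_ereal (q x))) powr real_of_ereal (q x)"
            using True by (simp add: g_def)
          also have "\<dots> = (F x / S) powr (1 / real_of_ereal (q x) * real_of_ereal (q x))"
            by (rule powr_powr)
          also have "\<dots> = F x / S" using Q1 F0[of x] Spos by simp
          also have "\<dots> = 1/S * F x" by simp
          finally have "\<bar>g x / 1\<bar> powr real_of_ereal (q x) = 1/S * F x" .
          moreover have "ennreal (1/S * F x) = ennreal (1/S) * ennreal (F x)"
            using Spos F0[of x] by (intro ennreal_mult) auto
          ultimately show ?thesis using True qf by simp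
        next
          case False thus ?thesis by (simp add: g_def)
        qed
      qed
      also have "\<dots> = ennreal (1/S) * sA" unfolding sA_def by (rule nn_integral_cmult) measurable
      also have "\<dots> = ennreal (1/S * S)" unfolding S(1) using Spos by (intro ennreal_mult[symmetric]) auto
      also have "\<dots> = 1" using Spos by simp
      finally have I1: "(\<integral>\<^sup>+x. ennreal (\<bar>g x / 1\<bar> powr real_of_ereal (q x)) * indicator {x. q x < \<infinity>} x \<partial>lebesgue) = 1" .
      have E0: "esssup lebesgue (\<lambda>x. ennreal \<bar>g x / 1\<bar> * indicator {x. q x = \<infinity>} x) \<le> 0"
        by (intro esssup_I) (auto simp: g_def A_def indicator_def)
      show ?thesis unfolding var_modular_def using I1 E0 by simp
    qed
    hence gn: "var_norm q g \<le> 1" using norm_le[of 1 q g] by simp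
    define m where "m = min 1 (1/S)"
    have m0: "0 \<le> m" using Spos by (simp add: m_def)
    have mS: "1/2 \<le> m * S" using S2 Spos by (auto simp: m_def min_def)
    have "ennreal (1/2 * \<mu>) \<le> var_norm r (\<lambda>x. f x * g x)"
    proof (rule norm_ge[OF rm _ rfin r1 mu])
      show "(\<lambda>x. f x * g x) \<in> borel_measurable lebesgue" by measurable
      have "ennreal (1/2) \<le> ennreal (m * S)" using mS by (intro ennreal_leI)
      also have "\<dots> = ennreal m * sA" using S m0 by (simp add: ennreal_mult)
      also have "\<dots> = (\<integral>\<^sup>+x. ennreal m * (ennreal (F x) * indicator A x) \<partial>lebesgue)"
        unfolding sA_def by (rule nn_integral_cmult[symmetric]) measurable
      also have "\<dots> \<le> (\<integral>\<^sup>+ x. ennreal (\<bar>f x * g x / \<mu>\<bar> powr real_of_ereal (r x)) \<partial>lebesgue)"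
      proof (rule nn_integral_mono)
        fix x
        show "ennreal m * (ennreal (F x) * indicator A x) \<le> ennreal (\<bar>f x * g x / \<mu>\<bar> powr real_of_ereal (r x))"
        proof (cases "x \<in> A")
          case True
          hence qf: "q x < \<infinity>" unfolding A_def by simp
          have Q1: "1 \<le> real_of_ereal (q x)" using ereal_ge1_real[OF q1 qf] by blast
          have P1: "1 \<le> real_of_ereal (p x)" using ereal_ge1_real[OF p1 pfin] by blast
          have R1: "1 \<le> real_of_ereal (r x)" using ereal_ge1_real[OF r1 rfin] by blast
          have rel: "1 / real_of_ereal (r x) = 1 / real_of_ereal (p x) + 1 / real_of_ereal (q x)"
            using qfin[OF qf] .
          have RQ: "real_of_ereal (r x) / real_of_ereal (q x) \<le> 1"
          proof -
            have "1 / real_of_ereal (q x) \<le> 1 / real_of_ereal (r x)" using rel P1 by simp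
            thus ?thesis using Q1 R1 by (simp add: field_simps)
          qed
          have RQ0: "0 \<le> real_of_ereal (r x) / real_of_ereal (q x)" using Q1 R1 by simp
          have e: "\<bar>f x * g x / \<mu>\<bar> = \<bar>f x / \<mu>\<bar> * ((\<bar>f x / \<mu>\<bar> powr real_of_ereal (p x)) / S) powr (1 / real_of_ereal (q x))"
            using True g0[of x] mu by (simp add: g_def F_def abs_mult abs_divide)
          have "\<bar>f x * g x / \<mu>\<bar> powr real_of_ereal (r x) = F x * S powr (-(real_of_ereal (r x) / real_of_ereal (q x)))"
            unfolding e F_def by (rule ident_pt[OF abs_ge_zero Spos R1 P1 Q1 rel])
          also have "\<dots> \<ge> F x * m"
            unfolding m_def using Spow_ge[OF Spos RQ0 RQ] F0[of x] by (intro mult_left_mono) auto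
          finally have le: "m * F x \<le> \<bar>f x * g x / \<mu>\<bar> powr real_of_ereal (r x)" by (simp add: mult.commute)
          have "ennreal m * (ennreal (F x) * indicator A x) = ennreal (m * F x)"
            using True m0 F0[of x] by (simp add: ennreal_mult)
          also have "\<dots> \<le> ennreal (\<bar>f x * g x / \<mu>\<bar> powr real_of_ereal (r x))" using le by (rule ennreal_leI)
          finally show ?thesis .
        next
          case False thus ?thesis by simp
        qed
      qed
      finally show "ennreal (1/2) \<le> (\<integral>\<^sup>+ x. ennreal (\<bar>f x * g x / \<mu>\<bar> powr real_of_ereal (r x)) \<partial>lebesgue)" .
    qed auto
    thus ?thesis using gm gn by blast
  qed
  then obtain g where g: "g \<in> borel_measurable lebesgue" "var_norm q g \<le> 1"
    "ennreal (1/2 * \<mu>) \<le> var_norm r (\<lambda>x. f x * g x)" by blast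
  show ?thesis unfolding var_norm_star_def
    by (rule SUP_upper2[of g]) (use g in auto)
qed



theorem mainTheorem10:
  fixes p q r :: "'a::euclidean_space \<Rightarrow> ereal"
  assumes "var_exponent p" and "var_exponent q" and "var_exponent r"
    and "\<And>x. inverse (r x) = inverse (p x) + inverse (q x)"
    and "(\<forall>x. r x < p x \<and> p x < \<infinity>) \<or>
         ((\<forall>x. r x \<le> p x \<and> p x < \<infinity>) \<and> esssup lebesgue r < \<infinity>)"
  shows "\<exists>c1 c2 :: real. 0 < c1 \<and> 0 < c2 \<and>
           (\<forall>f. f \<in> borel_measurable lebesgue \<longrightarrow>
              ennreal c1 * var_norm p f \<le> var_norm_star q r f \<and>
              var_norm_star q r f \<le> ennreal c2 * var_norm p f)"
proof -
  have pm: "p \<in> borel_measurable lebesgue" and p1: "\<And>x. 1 \<le> p x"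
    using assms(1) unfolding var_exponent_def by auto
  have qm: "q \<in> borel_measurable lebesgue" and q1: "\<And>x. 1 \<le> q x"
    using assms(2) unfolding var_exponent_def by auto
  have rm: "r \<in> borel_measurable lebesgue" and r1: "\<And>x. 1 \<le> r x"
    using assms(3) unfolding var_exponent_def by auto
  have pfin: "\<And>x. p x < \<infinity>" using assms(5) by auto
  note E = expo_pt[OF p1 q1 r1 pfin assms(4)]
  have rfin: "\<And>x. r x < \<infinity>" using E(1) .
  have qinf: "\<And>x. q x = \<infinity> \<Longrightarrow> r x = p x" using E(2) .
  have qfin: "\<And>x. q x < \<infinity> \<Longrightarrow>
       1 / real_of_ereal (r x) = 1 / real_of_ereal (p x) + 1 / real_of_ereal (q x)" using E(3) .
  have main: "ennreal (1/2) * var_norm p f \<le> var_norm_star q r f \<and>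
      var_norm_star q r f \<le> ennreal 2 * var_norm p f"
    if fm: "f \<in> borel_measurable lebesgue" for f :: "'a \<Rightarrow> real"
  proof
    have "var_norm p f \<le> 2 * var_norm_star q r f"
    proof (rule dense_le)
      fix y assume y: "y < var_norm p f"
      show "y \<le> 2 * var_norm_star q r f"
      proof (cases "y = 0")
        case True thus ?thesis by simp
      next
        case False
        have "y < top" using y top_greatest[of "var_norm p f"] by (rule order_less_le_trans)
        then obtain \<mu> where mu: "0 \<le> \<mu>" "y = ennreal \<mu>" by (auto simp: less_top_ennreal)
        have mu0: "0 < \<mu>" using mu False by (cases "\<mu> = 0") auto
        have L: "ennreal (1/2 * \<mu>) \<le> var_norm_star q r f"
          using lower[OF pm qm rm p1 q1 r1 pfin rfin qinf qfin fm mu0] y mu by simp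
        have "y = ennreal (2 * (1/2 * \<mu>))" using mu by simp
        also have "\<dots> = ennreal 2 * ennreal (1/2 * \<mu>)" using mu by (intro ennreal_mult) auto
        also have "\<dots> \<le> ennreal 2 * var_norm_star q r f" using L by (rule mult_left_mono) simp
        finally show ?thesis by simp
      qed
    qed
    hence "ennreal (1/2) * var_norm p f \<le> ennreal (1/2) * (ennreal 2 * var_norm_star q r f)"
      by (intro mult_left_mono) auto
    also have "\<dots> = var_norm_star q r f"
    proof -
      have h: "ennreal (1/2) * ennreal 2 = ennreal (1/2 * 2)"
        by (rule ennreal_mult[symmetric]) auto
      have "ennreal (1/2) * (ennreal 2 * var_norm_star q r f) = (ennreal (1/2) * ennreal 2) * var_norm_star q r f"
        by (rule mult.assoc[symmetric])
      also have "\<dots> = ennreal (1/2 * 2) * var_norm_star q r f" by (simp only: h)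
      also have "\<dots> = var_norm_star q r f" by simp
      finally show ?thesis .
    qed
    finally show "ennreal (1/2) * var_norm p f \<le> var_norm_star q r f" .
    show "var_norm_star q r f \<le> ennreal 2 * var_norm p f"
      unfolding var_norm_star_def
    proof (rule SUP_least)
      fix g assume "g \<in> {g. g \<in> borel_measurable lebesgue \<and> var_norm q g \<le> 1}"
      hence gm: "g \<in> borel_measurable lebesgue" and gn: "var_norm q g \<le> 1" by auto
      show "var_norm r (\<lambda>x. f x * g x) \<le> ennreal 2 * var_norm p f"
        using upper[OF pm qm rm p1 q1 r1 pfin rfin qinf qfin fm gm gn] by simp
    qed
  qed
  show ?thesis by (rule exI[of _ "1/2"], rule exI[of _ 2]) (use main in auto)
qed

end
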